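(* If $\Gamma$ is a simple, undirected, connected graph of order $p\ge 3$, then $\gamma_{[3R]}(\Gamma)\le \frac{7p}{4}$.
   Context: For a graph $\Gamma=(V,E)$ and $h:V\to\{0,1,2,3,4\}$, let $AN(v)=\{w\in N(v):h(w)\ge 1\}$, $AN[v]=AN(v)\cup\{v\}$ and $h(S)=\sum_{u\in S}h(u)$. $h$ is a triple Roman dominating function (3RDF) if every $v$ with $h(v)<3$ satisfies $h(AN[v])\ge|AN(v)|+3$. The triple Roman domination number $\gamma_{[3R]}(\Gamma)$ is the minimum weight $h(V)$ of a 3RDF of $\Gamma$. *)

theory Defs
  imports Complex_Main
begin

definition simple_graph :: "'a set \<Rightarrow> ('a \<Rightarrow> 'a \<Rightarrow> bool) \<Rightarrow> bool" where
  "simple_graph V E \<longleftrightarrow> finite V \<and> (\<forall>u v. E u v \<longrightarrow> u \<in> V \<and> v \<in> V)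
     \<and> (\<forall>u v. E u v \<longrightarrow> E v u) \<and> (\<forall>v. \<not> E v v)"

definition connected_graph :: "'a set \<Rightarrow> ('a \<Rightarrow> 'a \<Rightarrow> bool) \<Rightarrow> bool" where
  "connected_graph V E \<longleftrightarrow> (\<forall>u\<in>V. \<forall>v\<in>V. E\<^sup>*\<^sup>* u v)"

definition nbhd :: "'a set \<Rightarrow> ('a \<Rightarrow> 'a \<Rightarrow> bool) \<Rightarrow> 'a \<Rightarrow> 'a set" where
  "nbhd V E v = {w \<in> V. E v w}"

definition active_nbhd :: "'a set \<Rightarrow> ('a \<Rightarrow> 'a \<Rightarrow> bool) \<Rightarrow> ('a \<Rightarrow> nat) \<Rightarrow> 'a \<Rightarrow> 'a set" where
  "active_nbhd V E h v = {w \<in> nbhd V E v. h w \<ge> 1}"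

definition is_3RDF :: "'a set \<Rightarrow> ('a \<Rightarrow> 'a \<Rightarrow> bool) \<Rightarrow> ('a \<Rightarrow> nat) \<Rightarrow> bool" where
  "is_3RDF V E h \<longleftrightarrow> (\<forall>v\<in>V. h v \<le> 4) \<and>
     (\<forall>v\<in>V. h v < 3 \<longrightarrow>
        sum h (insert v (active_nbhd V E h v)) \<ge> card (active_nbhd V E h v) + 3)"

definition weight :: "'a set \<Rightarrow> ('a \<Rightarrow> nat) \<Rightarrow> nat" where
  "weight V h = sum h V"

text \<open>Functions are compared only through their values on V.\<close>
definition triple_roman_domination_number :: "'a set \<Rightarrow> ('a \<Rightarrow> 'a \<Rightarrow> bool) \<Rightarrow> nat" where
  "triple_roman_domination_number V E = Min {weight V h | h. is_3RDF V E h}"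

end

theory Submission
  imports Defs
begin

lemma cond_suff:
  assumes fin: "finite V" and irr: "\<not> E v v"
    and W: "W \<subseteq> active_nbhd V E h v" and ineq: "card W + 3 \<le> h v + sum h W"
  shows "card (active_nbhd V E h v) + 3 \<le> sum h (insert v (active_nbhd V E h v))"
proof -
  let ?A = "active_nbhd V E h v"
  have finA: "finite ?A" using fin unfolding active_nbhd_def nbhd_def by auto
  have vA: "v \<notin> ?A" using irr unfolding active_nbhd_def nbhd_def by auto
  have finW: "finite W" using W finA finite_subset by blast
  have s1: "sum h (insert v ?A) = h v + sum h ?A" using finA vA by simp
  have s2: "sum h ?A = sum h W + sum h (?A - W)"
    using finA W by (metis add.commute sum.subset_diff)
  have c2: "card ?A = card W + card (?A - W)"
    using finA W finW by (metis card_Diff_subset le_add_diff_inverse card_mono)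
  have "card (?A - W) = sum (\<lambda>_. 1::nat) (?A - W)" by simp
  also have "\<dots> \<le> sum h (?A - W)"
    by (rule sum_mono) (auto simp: active_nbhd_def)
  finally have "card (?A - W) \<le> sum h (?A - W)" .
  then show ?thesis using s1 s2 c2 ineq by linarith
qed

lemma cond_a:
  assumes "finite V" "\<not> E v v" "w \<in> V" "E v w" "4 \<le> h w"
  shows "card (active_nbhd V E h v) + 3 \<le> sum h (insert v (active_nbhd V E h v))"
  by (rule cond_suff[where W="{w}"]) (use assms in \<open>auto simp: active_nbhd_def nbhd_def\<close>)

lemma cond_b:
  assumes "finite V" "\<not> E v v" "w \<in> V" "E v w" "3 \<le> h w" "1 \<le> h v"
  shows "card (active_nbhd V E h v) + 3 \<le> sum h (insert v (active_nbhd V E h v))"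
  by (rule cond_suff[where W="{w}"]) (use assms in \<open>auto simp: active_nbhd_def nbhd_def\<close>)

lemma cond_c:
  assumes "finite V" "\<not> E v v" "w1 \<in> V" "E v w1" "3 \<le> h w1"
     "w2 \<in> V" "E v w2" "3 \<le> h w2" "w1 \<noteq> w2"
  shows "card (active_nbhd V E h v) + 3 \<le> sum h (insert v (active_nbhd V E h v))"
  by (rule cond_suff[where W="{w1,w2}"]) (use assms in \<open>auto simp: active_nbhd_def nbhd_def\<close>)

locale bfs =
  fixes V :: "'a set" and E :: "'a \<Rightarrow> 'a \<Rightarrow> bool" and r :: 'a and d :: "'a \<Rightarrow> nat"
  assumes sg: "simple_graph V E" and rV: "r \<in> V" and dr: "d r = 0"
    and par: "\<And>v. v \<in> V \<Longrightarrow> v \<noteq> r \<Longrightarrow> \<exists>w\<in>V. E v w \<and> d v = Suc (d w)"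
    and big: "card V \<ge> 3"
begin

lemma fin: "finite V" using sg by (simp add: simple_graph_def)
lemma symE: "E u v \<Longrightarrow> E v u" using sg by (simp add: simple_graph_def)
lemma inV: "E u v \<Longrightarrow> u \<in> V \<and> v \<in> V" using sg by (simp add: simple_graph_def)
lemma irr: "\<not> E v v" using sg by (simp add: simple_graph_def)

definition "nf v = {w \<in> V. E v w \<and> (d w = Suc (d v) \<or> d v = Suc (d w))}"
definition "lf v \<longleftrightarrow> card (nf v) = 1"
definition "lnb v = {w \<in> nf v. lf w}"
definition "sup2 v \<longleftrightarrow> card (lnb v) \<ge> 2"
definition "leaf2 v \<longleftrightarrow> lf v \<and> (\<exists>u\<in>nf v. sup2 u)"
definition "hs s v = (if leaf2 v then 0 else if sup2 v then 4 else
    if even (d v) = s then 3 else if lf v then (1::nat) else 0)"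

lemma nf_fin: "finite (nf v)" using fin by (simp add: nf_def)
lemma nf_sub: "nf v \<subseteq> V" by (auto simp: nf_def)
lemma nf_sym: "w \<in> nf v \<Longrightarrow> v \<in> nf w"
  using inV symE by (auto simp: nf_def)
lemma nf_par: "w \<in> nf v \<Longrightarrow> even (d w) \<noteq> even (d v)"
  by (auto simp: nf_def)
lemma par_nf: assumes "v \<in> V" "v \<noteq> r" obtains w where "w \<in> nf v" "d v = Suc (d w)"
  using par[OF assms] by (auto simp: nf_def)
lemma lf_unique: "lf v \<Longrightarrow> u \<in> nf v \<Longrightarrow> w \<in> nf v \<Longrightarrow> u = w"
  unfolding lf_def by (metis card_1_singletonE singletonD)

lemma d_pos: "v \<in> V \<Longrightarrow> v \<noteq> r \<Longrightarrow> d v \<noteq> 0"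
  using par by fastforce

lemma nf_ne: assumes "v \<in> V" shows "nf v \<noteq> {}"
proof (cases "v = r")
  case False then show ?thesis using par_nf[OF assms] by blast
next
  case True
  have "\<not> V \<subseteq> {r}" using big card_mono[of "{r}" V] by auto
  then obtain z0 where "z0 \<in> V" "z0 \<noteq> r" by auto
  then obtain z where z: "z \<in> V" "z \<noteq> r" and zmin: "\<forall>y. y \<in> V \<and> y \<noteq> r \<longrightarrow> d z \<le> d y"
    using ex_has_least_nat[of "\<lambda>z. z \<in> V \<and> z \<noteq> r" z0 d] by blast
  obtain p where p: "p \<in> V" "E z p" "d z = Suc (d p)" using par[OF z] by blast
  have "p = r" using zmin p by force
  then have "z \<in> nf r" using p z symE by (auto simp: nf_def dr)
  then show ?thesis using True by auto
qed

lemma noK2_aux: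
  assumes a: "lf a" and b: "lf b" and ba: "b \<in> nf a" and db: "d b = Suc (d a)"
  shows False
proof -
  have aV: "a \<in> V" using ba inV by (auto simp: nf_def)
  have bV: "b \<in> V" using ba by (auto simp: nf_def)
  have ar: "a = r"
  proof (rule ccontr)
    assume "a \<noteq> r"
    then obtain p where "p \<in> nf a" "d a = Suc (d p)" using par_nf aV by blast
    then show False using lf_unique[OF a ba] db by auto
  qed
  have "card {r, b} \<le> 2" by (simp add: card_insert_le_m1)
  then have "\<not> V \<subseteq> {r, b}" using big card_mono[of "{r,b}" V] by auto
  then obtain z0 where "z0 \<in> V" "z0 \<noteq> r" "z0 \<noteq> b" by auto
  then obtain z where z: "z \<in> V" "z \<noteq> r" "z \<noteq> b"
    and zmin: "\<forall>y. y \<in> V \<and> y \<noteq> r \<and> y \<noteq> b \<longrightarrow> d z \<le> d y"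
    using ex_has_least_nat[of "\<lambda>z. z \<in> V \<and> z \<noteq> r \<and> z \<noteq> b" z0 d] by blast
  obtain p where p: "p \<in> V" "E z p" "d z = Suc (d p)" using par[of z] z by blast
  show False
  proof (cases "p = r")
    case True
    then have "z \<in> nf a" using p z symE ar by (auto simp: nf_def dr)
    then show ?thesis using lf_unique[OF a ba] z by auto
  next
    case False
    show ?thesis
    proof (cases "p = b")
      case True
      then have "z \<in> nf b" using p z symE by (auto simp: nf_def)
      moreover have "a \<in> nf b" using nf_sym[OF ba] .
      ultimately show ?thesis using lf_unique[OF b] z ar by auto
    next
      case False
      then show ?thesis using zmin p \<open>p \<noteq> r\<close> by force
    qed
  qed
qed

lemma noK2: assumes "lf v" "u \<in> nf v" shows "\<not> lf u"
proof
  assume u: "lf u"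
  have "d u = Suc (d v) \<or> d v = Suc (d u)" using assms(2) by (auto simp: nf_def)
  then show False
    using noK2_aux[OF assms(1) u assms(2)] noK2_aux[OF u assms(1) nf_sym[OF assms(2)]] by auto
qed

lemma sup2_not_lf: "sup2 u \<Longrightarrow> \<not> lf u"
proof
  assume "sup2 u" "lf u"
  have "lnb u \<subseteq> nf u" by (auto simp: lnb_def)
  then have "card (lnb u) \<le> card (nf u)" using nf_fin card_mono by blast
  then show False using \<open>sup2 u\<close> \<open>lf u\<close> by (simp add: sup2_def lf_def)
qed

lemma nb_ge3: assumes "w \<in> nf v" "\<not> leaf2 w" "even (d v) \<noteq> s" shows "3 \<le> hs s w"
  using assms nf_par[OF assms(1)] by (auto simp: hs_def)

lemma hs_3RDF: "is_3RDF V E (hs s)"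
  unfolding is_3RDF_def
proof (intro conjI ballI impI)
  fix v assume "v \<in> V" show "hs s v \<le> 4" by (simp add: hs_def)
next
  fix v assume vV: "v \<in> V" and lt: "hs s v < 3"
  have FV: "finite V" by (rule fin)
  show "card (active_nbhd V E (hs s) v) + 3 \<le> sum (hs s) (insert v (active_nbhd V E (hs s) v))"
  proof (cases "leaf2 v")
    case True
    then obtain u where u: "u \<in> nf v" "sup2 u" by (auto simp: leaf2_def)
    have "\<not> leaf2 u" using sup2_not_lf[OF u(2)] by (auto simp: leaf2_def)
    then have "hs s u = 4" using u by (simp add: hs_def)
    then show ?thesis using cond_a[of V E v u "hs s"] FV irr u by (auto simp: nf_def)
  next
    case nl: False
    have ns: "\<not> sup2 v" and np: "even (d v) \<noteq> s" using nl lt by (auto simp: hs_def split: if_splits)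
    show ?thesis
    proof (cases "lf v")
      case True
      then have hv: "hs s v = 1" using nl ns np by (simp add: hs_def)
      obtain u where u: "u \<in> nf v" using nf_ne[OF vV] by auto
      have "\<not> leaf2 u" using noK2[OF True u] by (auto simp: leaf2_def)
      then have "3 \<le> hs s u" using nb_ge3[OF u _ np] by auto
      then show ?thesis using cond_b[of V E v u "hs s"] FV irr u hv by (auto simp: nf_def)
    next
      case False
      obtain w1 where w1: "w1 \<in> nf v" using nf_ne[OF vV] by auto
      have "nf v \<noteq> {w1}" using False by (auto simp: lf_def)
      then obtain w2 where w2: "w2 \<in> nf v" "w2 \<noteq> w1" using w1 by auto
      have nl2: "\<not> leaf2 w" if w: "w \<in> nf v" for w
      proof
        assume "leaf2 w"
        then obtain u where "lf w" "u \<in> nf w" "sup2 u" by (auto simp: leaf2_def)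
        then have "u = v" using lf_unique nf_sym[OF w] by blast
        then show False using ns \<open>sup2 u\<close> by simp
      qed
      have "3 \<le> hs s w1" "3 \<le> hs s w2" using nb_ge3[OF w1 nl2[OF w1] np] nb_ge3[OF w2(1) nl2[OF w2(1)] np] by auto
      then show ?thesis using cond_c[of V E v w1 "hs s" w2] FV irr w1 w2 by (auto simp: nf_def)
    qed
  qed
qed

definition "supp v = (SOME u. u \<in> nf v)"

lemma count: "2 * (sum (hs True) V + sum (hs False) V) \<le> 7 * card V"
proof -
  define A where "A = {v\<in>V. leaf2 v}"
  define B where "B = {v\<in>V. sup2 v}"
  define C where "C = {v\<in>V. \<not> leaf2 v \<and> lf v}"
  define D where "D = {v\<in>V. \<not> leaf2 v \<and> \<not> sup2 v \<and> \<not> lf v}"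
  define g where "g v = hs True v + hs False v" for v
  have FV: "finite V" by (rule fin)
  have fA: "finite A" "finite B" "finite C" "finite D" using FV by (auto simp: A_def B_def C_def D_def)
  have BA: "B \<inter> A = {}" using sup2_not_lf by (auto simp: A_def B_def leaf2_def)
  have CB: "C \<inter> B = {}" using sup2_not_lf by (auto simp: C_def B_def)
  have V: "V = A \<union> (B \<union> (C \<union> D))" by (auto simp: A_def B_def C_def D_def)
  have dis1: "A \<inter> (B \<union> (C \<union> D)) = {}" using BA by (auto simp: A_def C_def D_def)
  have dis2: "B \<inter> (C \<union> D) = {}" using CB by (auto simp: B_def D_def)
  have dis3: "C \<inter> D = {}" by (auto simp: C_def D_def)
  have cV: "card V = card A + (card B + (card C + card D))"
    using fA dis1 dis2 dis3 V by (metis card_Un_disjoint finite_UnI)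
  have sV: "sum g V = sum g A + (sum g B + (sum g C + sum g D))"
    using fA dis1 dis2 dis3 V by (metis sum.union_disjoint finite_UnI)
  have gA: "sum g A = 0" by (auto simp: A_def g_def hs_def)
  have gB: "sum g B = 8 * card B"
  proof -
    have "sum g B = sum (\<lambda>_. 8) B" using BA by (intro sum.cong) (auto simp: B_def A_def g_def hs_def)
    then show ?thesis by simp
  qed
  have gC: "sum g C = 4 * card C"
  proof -
    have "sum g C = sum (\<lambda>_. 4) C" using CB by (intro sum.cong) (auto simp: C_def B_def g_def hs_def)
    then show ?thesis by simp
  qed
  have gD: "sum g D = 3 * card D"
  proof -
    have "sum g D = sum (\<lambda>_. 3) D" by (intro sum.cong) (auto simp: D_def g_def hs_def)
    then show ?thesis by simp
  qed
  have CD: "card C \<le> card D"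
  proof (rule card_inj_on_le[of supp])
    have sp: "supp v \<in> nf v" if "v \<in> C" for v
    proof -
      have "nf v \<noteq> {}" using nf_ne that by (auto simp: C_def)
      then show ?thesis unfolding supp_def by (meson ex_in_conv someI_ex)
    qed
    show "inj_on supp C"
    proof (rule inj_onI)
      fix x y assume x: "x \<in> C" and y: "y \<in> C" and e: "supp x = supp y"
      show "x = y"
      proof (rule ccontr)
        assume ne: "x \<noteq> y"
        let ?u = "supp x"
        have "x \<in> lnb ?u" "y \<in> lnb ?u" using sp[OF x] sp[OF y] e nf_sym x y by (auto simp: lnb_def C_def)
        then have "{x,y} \<subseteq> lnb ?u" by auto
        then have "2 \<le> card (lnb ?u)" using ne card_mono[OF finite_subset[OF _ nf_fin]]
          by (metis card_2_iff lnb_def mem_Collect_eq subsetI)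
        then have "leaf2 x" using x sp[OF x] by (auto simp: leaf2_def sup2_def C_def)
        then show False using x by (auto simp: C_def)
      qed
    qed
    show "supp ` C \<subseteq> D"
    proof
      fix u assume "u \<in> supp ` C"
      then obtain v where v: "v \<in> C" "u = supp v" by auto
      have un: "u \<in> nf v" using sp[OF v(1)] v(2) by simp
      have "\<not> lf u" using noK2[OF _ un] v by (auto simp: C_def)
      moreover have "\<not> sup2 u" using v un by (auto simp: C_def leaf2_def)
      ultimately show "u \<in> D" using un nf_sub by (auto simp: D_def leaf2_def)
    qed
    show "finite D" by (rule fA)
  qed
  have AB: "2 * card B \<le> card A"
  proof -
    have "card (\<Union>(lnb ` B)) = (\<Sum>u\<in>B. card (lnb u))"
    proof (rule card_UN_disjoint)
      show "finite B" by (rule fA)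
      show "\<forall>i\<in>B. finite (lnb i)" using nf_fin by (auto simp: lnb_def)
      show "\<forall>i\<in>B. \<forall>j\<in>B. i \<noteq> j \<longrightarrow> lnb i \<inter> lnb j = {}"
      proof (intro ballI impI)
        fix i j assume "i \<in> B" "j \<in> B" "i \<noteq> j"
        show "lnb i \<inter> lnb j = {}"
        proof (rule ccontr)
          assume "lnb i \<inter> lnb j \<noteq> {}"
          then obtain w where "w \<in> nf i" "w \<in> nf j" "lf w" by (auto simp: lnb_def)
          then show False using lf_unique nf_sym \<open>i \<noteq> j\<close> by blast
        qed
      qed
    qed
    moreover have "(\<Sum>u\<in>B. card (lnb u)) \<ge> (\<Sum>u\<in>B. 2)" by (rule sum_mono) (auto simp: B_def sup2_def)
    moreover have "\<Union>(lnb ` B) \<subseteq> A" using nf_sub nf_sym by (auto simp: lnb_def B_def A_def leaf2_def)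
    then have "card (\<Union>(lnb ` B)) \<le> card A" using fA card_mono by blast
    ultimately show ?thesis by (simp add: mult.commute)
  qed
  have "sum (hs True) V + sum (hs False) V = sum g V" by (simp add: g_def sum.distrib)
  moreover have "2 * sum g V \<le> 7 * card V"
  proof -
    have "2 * sum g V = 16 * card B + 8 * card C + 6 * card D" using sV gA gB gC gD by simp
    also have "\<dots> \<le> 7 * card V" using cV CD AB by simp
    finally show ?thesis .
  qed
  ultimately show ?thesis by simp
qed

end

theorem corollary15:
  fixes V :: "'a set" and E :: "'a \<Rightarrow> 'a \<Rightarrow> bool"
  assumes "simple_graph V E" and "connected_graph V E" and "card V \<ge> 3"
  shows "real (triple_roman_domination_number V E) \<le> 7 * real (card V) / 4"
proof -
  have sg: "simple_graph V E" and cn: "connected_graph V E" using assms by auto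
  have "V \<noteq> {}" using assms(3) by auto
  then obtain r where rV: "r \<in> V" by auto
  define d where "d v = (LEAST n. (E ^^ n) r v)" for v
  have dr: "d r = 0" unfolding d_def by (rule Least_eq_0) simp
  have par: "\<exists>w\<in>V. E v w \<and> d v = Suc (d w)" if vV: "v \<in> V" and vr: "v \<noteq> r" for v
  proof -
    have "E\<^sup>*\<^sup>* r v" using cn rV vV by (simp add: connected_graph_def)
    from rtranclp_imp_relpowp[OF this] obtain n where "(E ^^ n) r v" ..
    then have pv: "(E ^^ d v) r v" unfolding d_def by (rule LeastI)
    have "d v \<noteq> 0"
    proof
      assume "d v = 0"
      then have "(E ^^ 0) r v" using pv by simp
      then have "r = v" by simp
      then show False using vr by simp
    qed
    then obtain m where m: "d v = Suc m" using not0_implies_Suc by blast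
    have "(E ^^ Suc m) r v" using pv m by simp
    then obtain w where w1: "(E ^^ m) r w" and w2: "E w v" by (rule relpowp_Suc_E)
    have "d w \<le> m" unfolding d_def using w1 by (rule Least_le)
    moreover have "\<not> d w < m"
    proof
      assume lt: "d w < m"
      have "(E ^^ d w) r w" unfolding d_def using w1 by (rule LeastI)
      then have "(E ^^ Suc (d w)) r v" using w2 by (rule relpowp_Suc_I)
      then have "d v \<le> Suc (d w)" unfolding d_def by (rule Least_le)
      then show False using lt m by simp
    qed
    ultimately have "d w = m" by simp
    moreover have "w \<in> V" "E v w" using w2 sg by (auto simp: simple_graph_def)
    ultimately show ?thesis using m by auto
  qed
  interpret bfs V E r d using sg rV dr par assms(3) by unfold_locales blast+
  let ?S = "{weight V h | h. is_3RDF V E h}"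
  have finS: "finite ?S"
  proof (rule finite_subset)
    show "?S \<subseteq> {..4 * card V}"
    proof
      fix x assume "x \<in> ?S"
      then obtain h where x: "x = weight V h" and h: "is_3RDF V E h" by auto
      have "sum h V \<le> sum (\<lambda>_. 4) V" using h by (intro sum_mono) (auto simp: is_3RDF_def)
      then show "x \<in> {..4 * card V}" using x by (simp add: weight_def mult.commute)
    qed
  qed simp
  have m1: "triple_roman_domination_number V E \<le> sum (hs True) V"
    unfolding triple_roman_domination_number_def
    by (rule Min_le[OF finS]) (use hs_3RDF[of True] in \<open>auto simp: weight_def\<close>)
  have m2: "triple_roman_domination_number V E \<le> sum (hs False) V"
    unfolding triple_roman_domination_number_def
    by (rule Min_le[OF finS]) (use hs_3RDF[of False] in \<open>auto simp: weight_def\<close>)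
  have "4 * triple_roman_domination_number V E \<le> 2 * (sum (hs True) V + sum (hs False) V)"
    using m1 m2 by simp
  then have "4 * triple_roman_domination_number V E \<le> 7 * card V" using count by (rule order.trans)
  then have "real (4 * triple_roman_domination_number V E) \<le> real (7 * card V)" by (simp only: of_nat_le_iff)
  then show ?thesis by simp
qed

end
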